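(* For each $r\in\mathbb{N}$ there is $\alpha>0$ such that the following holds: if $k\le r^2$, $F\subset M_r$ is a $k$-dimensional $C^*$-subalgebra with a set of matrix units $\{e_1,\dots,e_k\}$, and $q\in F$ is a projection, then $q\in\mathcal{Z}(F)$ or $\|[e_m,q]\|\ge\alpha$ for some $m\in\{1,\dots,k\}$.
   Context: If $F\cong M_{r_1}\oplus\dots\oplus M_{r_s}$, a set $\{e_1,\dots,e_k\}\subset F$ is a set of matrix units for $F$ if $k=\sum_i r_i^2$ and $\{e_1,\dots,e_k\}=\{f_i^{(l,m)}: i=1,\dots,s;\ 1\le l,m\le r_i\}$, where for each $i$, $\{f_i^{(l,m)}\}_{l,m}$ is a system of matrix units for the summand $M_{r_i}$. $\mathcal{Z}(F)$ is the center of $F$. *)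

theory Defs
  imports "HOL-Analysis.Analysis"
begin

text \<open>Matrices in M_r are modelled as complex^'n^'n, where CARD('n) = r.\<close>

type_synonym 'n cmat = "complex ^ 'n ^ 'n"

definition cscale :: "complex \<Rightarrow> ('n::finite) cmat \<Rightarrow> 'n cmat" where
  "cscale c A = (\<chi> i j. c * A $ i $ j)"

definition adj :: "('n::finite) cmat \<Rightarrow> 'n cmat" where
  "adj A = (\<chi> i j. cnj (A $ j $ i))"

definition opnorm :: "('n::finite) cmat \<Rightarrow> real" where
  "opnorm A = onorm (\<lambda>v. A *v v)"

definition commutator :: "('n::finite) cmat \<Rightarrow> 'n cmat \<Rightarrow> 'n cmat" where
  "commutator a b = a ** b - b ** a"

text \<open>A (finite-dimensional, hence automatically norm-closed) C*-subalgebra of M_r: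
  a complex linear subspace closed under multiplication and adjoint.\<close>
definition cstar_subalg :: "('n::finite) cmat set \<Rightarrow> bool" where
  "cstar_subalg F \<longleftrightarrow> 0 \<in> F \<and> (\<forall>x\<in>F. \<forall>y\<in>F. x + y \<in> F) \<and>
     (\<forall>c. \<forall>x\<in>F. cscale c x \<in> F) \<and> (\<forall>x\<in>F. \<forall>y\<in>F. x ** y \<in> F) \<and>
     (\<forall>x\<in>F. adj x \<in> F)"

definition cdim :: "('n::finite) cmat set \<Rightarrow> nat" where
  "cdim F = vector_space.dim cscale F"

definition is_projection :: "('n::finite) cmat \<Rightarrow> bool" where
  "is_projection q \<longleftrightarrow> adj q = q \<and> q ** q = q"

definition center :: "('n::finite) cmat set \<Rightarrow> 'n cmat set" where
  "center F = {z \<in> F. \<forall>x\<in>F. z ** x = x ** z}"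

text \<open>f is a family of matrix units for F with respect to a decomposition
  F = M_{rs 0} + ... + M_{rs (s-1)}: for each block i < s, the f i l m (l, m < rs i)
  form a system of matrix units for the i-th summand (nonzero, f(l,m) f(l',m') =
  delta_{m l'} f(l,m'), f(l,m)^* = f(m,l)), distinct summands are orthogonal,
  and together they span F (so the summands exhaust F).\<close>
definition matrix_unit_family ::
  "('n::finite) cmat set \<Rightarrow> nat \<Rightarrow> (nat \<Rightarrow> nat) \<Rightarrow> (nat \<Rightarrow> nat \<Rightarrow> nat \<Rightarrow> ('n::finite) cmat) \<Rightarrow> bool" where
  "matrix_unit_family F s rs f \<longleftrightarrow>
     (\<forall>i<s. rs i > 0) \<and>
     (\<forall>i<s. \<forall>l<rs i. \<forall>m<rs i. f i l m \<in> F \<and> f i l m \<noteq> 0 \<and> adj (f i l m) = f i m l) \<and>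
     (\<forall>i<s. \<forall>l<rs i. \<forall>m<rs i. \<forall>j<s. \<forall>l'<rs j. \<forall>m'<rs j.
        f i l m ** f j l' m' = (if i = j \<and> m = l' then f i l m' else 0)) \<and>
     F = module.span cscale {f i l m | i l m. i < s \<and> l < rs i \<and> m < rs i}"

definition matrix_units :: "('n::finite) cmat set \<Rightarrow> nat \<Rightarrow> (nat \<Rightarrow> ('n::finite) cmat) \<Rightarrow> bool" where
  "matrix_units F k e \<longleftrightarrow>
     (\<exists>s rs f. matrix_unit_family F s rs f \<and> k = (\<Sum>i<s. (rs i)\<^sup>2) \<and>
        e ` {1..k} = {f i l m | i l m. i < s \<and> l < rs i \<and> m < rs i})"

end

theory Submission
  imports Defs
begin

lemma module_cscale: "module (cscale :: complex \<Rightarrow> ('n::finite) cmat \<Rightarrow> 'n cmat)"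
  by unfold_locales (auto simp: cscale_def vec_eq_iff algebra_simps)

lemma cscale_mult_left: "cscale c A ** B = cscale c (A ** B)"
  by (simp add: cscale_def matrix_matrix_mult_def vec_eq_iff sum_distrib_left mult.assoc)

lemma cscale_mult_right: "A ** cscale c B = cscale c (A ** B)"
  by (simp add: cscale_def matrix_matrix_mult_def vec_eq_iff sum_distrib_left mult.left_commute)

lemma matrix_add_rdistrib': "(B + C) ** A = B ** A + C ** (A::'a::semiring_1^'n^'n)"
  by (simp add: matrix_matrix_mult_def vec_eq_iff sum.distrib distrib_right)

lemma cscale_cscale: "cscale a (cscale b A) = cscale (a*b) A"
  by (simp add: cscale_def vec_eq_iff mult.assoc)

lemma cscale_0[simp]: "cscale c 0 = 0" "cscale 0 A = 0" "cscale 1 A = A"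
  by (auto simp: cscale_def vec_eq_iff)

lemma cscale_add: "cscale c (A + B) = cscale c A + cscale c B" "cscale (a + b) A = cscale a A + cscale b A"
  by (auto simp: cscale_def vec_eq_iff algebra_simps)

lemma cscale_sum: "cscale (\<Sum>k\<in>K. g k) A = (\<Sum>k\<in>K. cscale (g k) A)"
  by (induction K rule: infinite_finite_induct) (auto simp: cscale_add)

lemma cscale_nth: "cscale c A $ i $ j = c * A $ i $ j"
  by (simp add: cscale_def)

lemma cscale_eq_cancel: "A \<noteq> 0 \<Longrightarrow> cscale a A = cscale b A \<Longrightarrow> a = b"
  by (auto simp: cscale_def vec_eq_iff)

lemma matrix_sum_left: "(\<Sum>k\<in>K. g k) ** A = (\<Sum>k\<in>K. g k ** (A::'a::semiring_1^'n^'n))"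
  by (induction K rule: infinite_finite_induct) (auto simp: matrix_add_rdistrib')

lemma matrix_sum_right: "A ** (\<Sum>k\<in>K. g k) = (\<Sum>k\<in>K. A ** (g k::'a::semiring_1^'n^'n))"
  by (induction K rule: infinite_finite_induct) (auto simp: matrix_add_ldistrib)

lemma adj_mult: "adj (A ** B) = adj B ** adj A"
  by (simp add: adj_def matrix_matrix_mult_def vec_eq_iff mult.commute)

lemma adj_cscale: "adj (cscale c A) = cscale (cnj c) (adj A)"
  by (simp add: adj_def cscale_def vec_eq_iff)

lemma adj_nth: "adj A $ i $ j = cnj (A $ j $ i)"
  by (simp add: adj_def)

lemma entry_le_opnorm: "cmod (A $ i $ j) \<le> opnorm A"
proof -
  have "(A *v axis j 1) $ i = A $ i $ j"
    by (simp add: matrix_vector_mult_def axis_def if_distrib cong: if_cong)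
  then have "cmod (A $ i $ j) \<le> norm (A *v axis j 1)"
    by (metis Finite_Cartesian_Product.norm_nth_le)
  also have "\<dots> \<le> opnorm A * norm (axis j (1::complex))"
    unfolding opnorm_def by (rule onorm) simp
  also have "norm (axis j (1::complex)) = 1" by (rule norm_Basis) (auto simp: Basis_vec_def Basis_complex_def)
  finally show ?thesis by simp
qed


lemma adj_mult_diag: "(adj A ** A) $ j $ j = of_real (\<Sum>k\<in>UNIV. (cmod (A $ k $ j))\<^sup>2)"
proof -
  have "(adj A ** A) $ j $ j = (\<Sum>k\<in>UNIV. A $ k $ j * cnj (A $ k $ j))"
    by (simp add: matrix_matrix_mult_def adj_def mult.commute)
  also have "\<dots> = (\<Sum>k\<in>UNIV. of_real ((cmod (A $ k $ j))\<^sup>2))"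
    by (simp only: complex_norm_square)
  also have "\<dots> = of_real (\<Sum>k\<in>UNIV. (cmod (A $ k $ j))\<^sup>2)"
    by (simp only: of_real_sum)
  finally show ?thesis .
qed

lemma proj_diag_le1:
  assumes "is_projection P"
  shows "P $ j $ j = of_real (\<Sum>k\<in>UNIV. (cmod (P $ k $ j))\<^sup>2)"
    and "(\<Sum>k\<in>UNIV. (cmod (P $ k $ j))\<^sup>2) \<le> 1"
proof -
  have P: "adj P ** P = P" using assms by (simp add: is_projection_def)
  show e: "P $ j $ j = of_real (\<Sum>k\<in>UNIV. (cmod (P $ k $ j))\<^sup>2)"
    using adj_mult_diag[of P j] P by simp
  define d where "d = (\<Sum>k\<in>UNIV. (cmod (P $ k $ j))\<^sup>2)"
  have "(cmod (P $ j $ j))\<^sup>2 \<le> d"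
    unfolding d_def by (rule member_le_sum) auto
  moreover have "cmod (P $ j $ j) = \<bar>d\<bar>"
    using e by (simp only: d_def[symmetric] norm_of_real)
  moreover have "d \<ge> 0" unfolding d_def by (simp add: sum_nonneg)
  ultimately have "d\<^sup>2 \<le> d" by simp
  have "d \<le> 1"
  proof (rule ccontr)
    assume "\<not> d \<le> 1"
    then have "d * 1 < d * d" by (intro mult_strict_left_mono) auto
    then show False using \<open>d\<^sup>2 \<le> d\<close> by (simp add: power2_eq_square)
  qed
  then show "(\<Sum>k\<in>UNIV. (cmod (P $ k $ j))\<^sup>2) \<le> 1" by (simp add: d_def)
qed

lemma entry_le1:
  assumes "is_projection P" "adj A ** A = P"
  shows "cmod (A $ k $ j) \<le> 1"
proof -
  have "of_real (\<Sum>k\<in>UNIV. (cmod (A $ k $ j))\<^sup>2) = (of_real (\<Sum>k\<in>UNIV. (cmod (P $ k $ j))\<^sup>2) :: complex)"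
    using adj_mult_diag[of A j] proj_diag_le1(1)[OF assms(1), of j] assms(2) by simp
  then have "(\<Sum>k\<in>UNIV. (cmod (A $ k $ j))\<^sup>2) \<le> 1"
    using proj_diag_le1(2)[OF assms(1), of j] by (simp only: of_real_eq_iff)
  moreover have "(cmod (A $ k $ j))\<^sup>2 \<le> (\<Sum>k\<in>UNIV. (cmod (A $ k $ j))\<^sup>2)"
    by (rule member_le_sum) auto
  ultimately have "(cmod (A $ k $ j))\<^sup>2 \<le> 1" by simp
  then show ?thesis by (simp add: power_le_one_iff abs_le_square_iff)
qed

lemma idem_big_entry:
  fixes g :: "'a \<Rightarrow> 'a \<Rightarrow> complex"
  assumes fin: "finite I" and idem: "\<And>u v. u \<in> I \<Longrightarrow> v \<in> I \<Longrightarrow> g u v = (\<Sum>k\<in>I. g u k * g k v)"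
    and nz: "u0 \<in> I" "v0 \<in> I" "g u0 v0 \<noteq> 0"
  shows "\<exists>u\<in>I. \<exists>v\<in>I. 1 / real (card I) \<le> cmod (g u v)"
proof -
  define S where "S = (\<lambda>(u,v). cmod (g u v)) ` (I \<times> I)"
  have finS: "finite S" "S \<noteq> {}" using fin nz by (auto simp: S_def)
  define M where "M = Max S"
  have "M \<in> S" using finS by (simp add: M_def)
  then obtain u v where uv: "u \<in> I" "v \<in> I" "M = cmod (g u v)" by (auto simp: S_def)
  have le: "cmod (g a b) \<le> M" if "a \<in> I" "b \<in> I" for a b
    using finS that unfolding M_def S_def by (intro Max_ge) auto
  have "0 < cmod (g u0 v0)" using nz by simp
  then have Mpos: "0 < M" using le[OF nz(1,2)] by linarith
  have guv: "g u v = (\<Sum>k\<in>I. g u k * g k v)" by (rule idem[OF uv(1) uv(2)])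
  have "M = cmod (\<Sum>k\<in>I. g u k * g k v)" using uv(3) guv by metis
  also have "\<dots> \<le> (\<Sum>k\<in>I. cmod (g u k) * cmod (g k v))"
    by (rule order_trans[OF norm_sum]) (simp add: norm_mult)
  also have "\<dots> \<le> (\<Sum>k\<in>I. M * M)"
    by (rule sum_mono, rule mult_mono) (use le uv in auto)
  also have "\<dots> = real (card I) * M * M" by simp
  finally have "M \<le> real (card I) * M * M" .
  then have "M * 1 \<le> M * (real (card I) * M)" by (simp add: algebra_simps)
  then have "1 \<le> real (card I) * M" using Mpos
    by (simp only: mult_le_cancel_left_pos)
  then have "1 / real (card I) \<le> M"
  proof -
    have "0 < real (card I)" using fin nz by (auto simp: card_gt_0_iff)
    then show ?thesis using \<open>1 \<le> real (card I) * M\<close> by (simp add: divide_le_eq mult.commute)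
  qed
  then show ?thesis using uv by blast
qed


lemma mu_props:
  assumes "matrix_unit_family F s rs f"
  shows mu_mult: "\<And>i l m j l' m'. i<s \<Longrightarrow> l<rs i \<Longrightarrow> m<rs i \<Longrightarrow> j<s \<Longrightarrow> l'<rs j \<Longrightarrow> m'<rs j \<Longrightarrow>
        f i l m ** f j l' m' = (if i = j \<and> m = l' then f i l m' else 0)"
    and mu_basic: "\<And>i l m. i<s \<Longrightarrow> l<rs i \<Longrightarrow> m<rs i \<Longrightarrow> f i l m \<in> F \<and> f i l m \<noteq> 0 \<and> adj (f i l m) = f i m l"
    and mu_span: "F = module.span cscale {f i l m | i l m. i < s \<and> l < rs i \<and> m < rs i}"
  using assms unfolding matrix_unit_family_def by blast+

lemma mu_proj:
  assumes "matrix_unit_family F s rs f" "i<s" "a<rs i"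
  shows "is_projection (f i a a)"
  using mu_mult[OF assms(1) assms(2,3,3,2,3,3)] mu_basic[OF assms(1) assms(2,3,3)]
  by (simp add: is_projection_def)

lemma mu_entry_le1:
  assumes "matrix_unit_family F s rs f" "i<s" "a<rs i" "b<rs i"
  shows "cmod (f i a b $ u $ v) \<le> 1"
proof (rule entry_le1)
  show "is_projection (f i b b)" by (rule mu_proj[OF assms(1,2,4)])
  show "adj (f i a b) ** f i a b = f i b b"
    using mu_mult[OF assms(1) assms(2,4,3,2,3,4)] mu_basic[OF assms(1) assms(2,3,4)] by simp
qed

lemma mu_big_entry:
  assumes mu: "matrix_unit_family F s rs (f :: nat \<Rightarrow> nat \<Rightarrow> nat \<Rightarrow> ('n::finite) cmat)"
    and i: "i<s" "a<rs i" "b<rs i"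
  shows "\<exists>u v. 1 / (real CARD('n))\<^sup>2 \<le> cmod (f i a b $ u $ v)"
proof -
  define P where "P = f i a a"
  have PP: "P ** P = P" using mu_proj[OF mu i(1,2)] by (simp add: P_def is_projection_def)
  have "P \<noteq> 0" using mu_basic[OF mu i(1,2,2)] by (simp add: P_def)
  have "\<exists>u0 v0. P $ u0 $ v0 \<noteq> 0"
  proof (rule ccontr)
    assume "\<not> (\<exists>u0 v0. P $ u0 $ v0 \<noteq> 0)"
    then have "P = 0" by (simp add: vec_eq_iff)
    then show False using \<open>P \<noteq> 0\<close> by simp
  qed
  then obtain u0 v0 where nz: "P $ u0 $ v0 \<noteq> 0" by blast
  have idem: "P $ u $ v = (\<Sum>k\<in>UNIV. P $ u $ k * P $ k $ v)" for u v
  proof -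
    have "P $ u $ v = (P ** P) $ u $ v" using PP by simp
    also have "\<dots> = (\<Sum>k\<in>UNIV. P $ u $ k * P $ k $ v)" by (simp add: matrix_matrix_mult_def)
    finally show ?thesis .
  qed
  have "\<exists>u\<in>UNIV. \<exists>v\<in>UNIV. 1 / real (card (UNIV::'n set)) \<le> cmod (P $ u $ v)"
    by (rule idem_big_entry[of UNIV "\<lambda>u v. P $ u $ v" u0 v0], simp, rule idem, simp, simp, rule nz)
  then obtain u v where uv: "1 / real (card (UNIV::'n set)) \<le> cmod (P $ u $ v)" by blast
  have fac: "P = f i a b ** f i b a"
    using mu_mult[OF mu i(1,2,3,1,3,2)] by (simp add: P_def)
  have "P $ u $ v = (\<Sum>k\<in>UNIV. f i a b $ u $ k * f i b a $ k $ v)"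
    using fac by (simp add: matrix_matrix_mult_def)
  then have "cmod (P $ u $ v) = cmod (\<Sum>k\<in>UNIV. f i a b $ u $ k * f i b a $ k $ v)" by (rule arg_cong)
  also have "\<dots> \<le> (\<Sum>k\<in>UNIV. cmod (f i a b $ u $ k * f i b a $ k $ v))" by (rule norm_sum)
  also have "\<dots> = (\<Sum>k\<in>UNIV. cmod (f i a b $ u $ k) * cmod (f i b a $ k $ v))" by (simp add: norm_mult)
  also have "\<dots> \<le> (\<Sum>k\<in>UNIV. cmod (f i a b $ u $ k))"
    by (rule sum_mono) (simp add: mult_left_le mu_entry_le1[OF mu i(1,3,2)])
  finally have sumge: "1 / real CARD('n) \<le> (\<Sum>k\<in>UNIV. cmod (f i a b $ u $ k))" using uv by simp
  show ?thesis
  proof (rule ccontr)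
    assume "\<not> ?thesis"
    then have lt: "cmod (f i a b $ u $ k) < 1 / (real CARD('n))\<^sup>2" for k by (simp add: not_le)
    have "(\<Sum>k\<in>UNIV. cmod (f i a b $ u $ k)) < (\<Sum>k\<in>(UNIV::'n set). 1 / (real CARD('n))\<^sup>2)"
      by (rule sum_strict_mono) (auto simp: lt)
    also have "\<dots> = 1 / real CARD('n)" by (simp add: power2_eq_square)
    finally show False using sumge by simp
  qed
qed

lemma compress_bound:
  assumes mu: "matrix_unit_family F s rs (f :: nat \<Rightarrow> nat \<Rightarrow> nat \<Rightarrow> ('n::finite) cmat)"
    and i: "i<s" "a<rs i" "b<rs i"
    and eq: "f i a a ** X ** f i b b = cscale c (f i a b)"
  shows "cmod c \<le> (real CARD('n))^4 * opnorm X"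
proof -
  define n where "n = real CARD('n)"
  have npos: "n > 0" by (simp add: n_def)
  obtain u v where uv: "1 / n\<^sup>2 \<le> cmod (f i a b $ u $ v)"
    using mu_big_entry[OF mu i] unfolding n_def by blast
  have "(f i a a ** X ** f i b b) $ u $ v = (\<Sum>t\<in>UNIV. (\<Sum>r\<in>UNIV. f i a a $ u $ r * X $ r $ t) * f i b b $ t $ v)"
    by (simp add: matrix_matrix_mult_def)
  then have "cmod ((f i a a ** X ** f i b b) $ u $ v) = cmod (\<Sum>t\<in>UNIV. (\<Sum>r\<in>UNIV. f i a a $ u $ r * X $ r $ t) * f i b b $ t $ v)"
    by (rule arg_cong)
  also have "\<dots> \<le> (\<Sum>t\<in>UNIV. cmod ((\<Sum>r\<in>UNIV. f i a a $ u $ r * X $ r $ t) * f i b b $ t $ v))"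
    by (rule norm_sum)
  also have "\<dots> = (\<Sum>t\<in>UNIV. cmod (\<Sum>r\<in>UNIV. f i a a $ u $ r * X $ r $ t) * cmod (f i b b $ t $ v))"
    by (simp add: norm_mult)
  also have "\<dots> \<le> (\<Sum>t\<in>UNIV. (\<Sum>r\<in>UNIV. cmod (f i a a $ u $ r) * cmod (X $ r $ t)) * cmod (f i b b $ t $ v))"
  proof (rule sum_mono, rule mult_right_mono)
    fix t
    have "cmod (\<Sum>r\<in>UNIV. f i a a $ u $ r * X $ r $ t) \<le> (\<Sum>r\<in>UNIV. cmod (f i a a $ u $ r * X $ r $ t))"
      by (rule norm_sum)
    then show "cmod (\<Sum>r\<in>UNIV. f i a a $ u $ r * X $ r $ t) \<le> (\<Sum>r\<in>UNIV. cmod (f i a a $ u $ r) * cmod (X $ r $ t))"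
      by (simp add: norm_mult)
  qed simp
  also have "\<dots> \<le> (\<Sum>t\<in>(UNIV::'n set). (\<Sum>r\<in>(UNIV::'n set). opnorm X))"
  proof (intro sum_mono)
    fix t
    have "(\<Sum>r\<in>UNIV. cmod (f i a a $ u $ r) * cmod (X $ r $ t)) \<le> (\<Sum>r\<in>(UNIV::'n set). opnorm X)"
    proof (rule sum_mono)
      fix r
      show "cmod (f i a a $ u $ r) * cmod (X $ r $ t) \<le> opnorm X"
        by (rule order_trans[OF mult_left_le_one_le entry_le_opnorm]) (auto simp: mu_entry_le1[OF mu i(1,2,2)])
    qed
    moreover have "0 \<le> (\<Sum>r\<in>UNIV. cmod (f i a a $ u $ r) * cmod (X $ r $ t))" by (simp add: sum_nonneg)
    ultimately show "(\<Sum>r\<in>UNIV. cmod (f i a a $ u $ r) * cmod (X $ r $ t)) * cmod (f i b b $ t $ v) \<le> (\<Sum>r\<in>(UNIV::'n set). opnorm X)"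
      by (meson mu_entry_le1[OF mu i(1,3,3)] mult_right_le_one_le norm_ge_zero order_trans)
  qed
  also have "\<dots> = n\<^sup>2 * opnorm X" by (simp add: n_def power2_eq_square)
  finally have A: "cmod c * cmod (f i a b $ u $ v) \<le> n\<^sup>2 * opnorm X"
    using eq by (simp add: cscale_nth norm_mult)
  have "cmod c * (1 / n\<^sup>2) \<le> cmod c * cmod (f i a b $ u $ v)"
    by (rule mult_left_mono[OF uv]) simp
  with A have "cmod c * (1 / n\<^sup>2) \<le> n\<^sup>2 * opnorm X" by linarith
  then have "cmod c \<le> n\<^sup>2 * opnorm X * n\<^sup>2" using npos by (simp add: field_simps)
  then show ?thesis by (simp add: n_def power4_eq_xxxx power2_eq_square mult_ac)
qed


lemma cscale_sum_right: "cscale c (\<Sum>k\<in>K. g k) = (\<Sum>k\<in>K. cscale c (g k))"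
  by (induction K rule: infinite_finite_induct) (auto simp: cscale_add)

definition good :: "nat \<Rightarrow> (nat \<Rightarrow> nat) \<Rightarrow> (nat \<Rightarrow> nat \<Rightarrow> nat \<Rightarrow> ('n::finite) cmat) \<Rightarrow> 'n cmat \<Rightarrow> bool" where
  "good s rs f x \<longleftrightarrow>
    (\<forall>i<s. \<forall>a<rs i. \<forall>b<rs i. \<exists>c. f i a a ** x ** f i b b = cscale c (f i a b)) \<and>
    (\<forall>i<s. \<forall>a<rs i. f i a a ** x = (\<Sum>k<rs i. f i a a ** x ** f i k k)) \<and>
    (\<forall>i<s. \<forall>b<rs i. x ** f i b b = (\<Sum>k<rs i. f i k k ** x ** f i b b))"

lemma good_subspace: "module.subspace cscale (Collect (good s rs f))"
proof -
  interpret module cscale by (rule module_cscale)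
  show ?thesis
  unfolding subspace_def
  proof (intro conjI ballI allI)
    show "0 \<in> Collect (good s rs f)" by (auto simp: good_def intro: exI[of _ 0])
  next
    fix x y assume "x \<in> Collect (good s rs f)" "y \<in> Collect (good s rs f)"
    then have gx: "good s rs f x" and gy: "good s rs f y" by auto
    have "good s rs f (x + y)"
      unfolding good_def
    proof (intro conjI allI impI)
      fix i a b assume h: "i < s" "a < rs i" "b < rs i"
      obtain c1 where "f i a a ** x ** f i b b = cscale c1 (f i a b)" using gx h unfolding good_def by blast
      moreover obtain c2 where "f i a a ** y ** f i b b = cscale c2 (f i a b)" using gy h unfolding good_def by blast
      ultimately have "f i a a ** (x + y) ** f i b b = cscale (c1 + c2) (f i a b)"
        by (simp add: matrix_add_ldistrib matrix_add_rdistrib' cscale_add)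
      then show "\<exists>c. f i a a ** (x + y) ** f i b b = cscale c (f i a b)" by blast
    next
      fix i a assume h: "i < s" "a < rs i"
      then show "f i a a ** (x + y) = (\<Sum>k<rs i. f i a a ** (x + y) ** f i k k)"
        using gx gy unfolding good_def
        by (simp add: matrix_add_ldistrib matrix_add_rdistrib' sum.distrib)
    next
      fix i b assume h: "i < s" "b < rs i"
      then show "(x + y) ** f i b b = (\<Sum>k<rs i. f i k k ** (x + y) ** f i b b)"
        using gx gy unfolding good_def
        by (simp add: matrix_add_ldistrib matrix_add_rdistrib' sum.distrib)
    qed
    then show "x + y \<in> Collect (good s rs f)" by simp
  next
    fix c x assume "x \<in> Collect (good s rs f)"
    then have gx: "good s rs f x" by auto
    have "good s rs f (cscale c x)"
      unfolding good_def
    proof (intro conjI allI impI)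
      fix i a b assume h: "i < s" "a < rs i" "b < rs i"
      obtain c1 where "f i a a ** x ** f i b b = cscale c1 (f i a b)" using gx h unfolding good_def by blast
      then have "f i a a ** cscale c x ** f i b b = cscale (c * c1) (f i a b)"
        by (simp add: cscale_mult_left cscale_mult_right cscale_cscale)
      then show "\<exists>d. f i a a ** cscale c x ** f i b b = cscale d (f i a b)" by blast
    next
      fix i a assume h: "i < s" "a < rs i"
      have e: "f i a a ** x = (\<Sum>k<rs i. f i a a ** x ** f i k k)" using gx h unfolding good_def by blast
      have "f i a a ** cscale c x = cscale c (f i a a ** x)" by (simp add: cscale_mult_left cscale_mult_right)
      also have "\<dots> = cscale c (\<Sum>k<rs i. f i a a ** x ** f i k k)" using e by (rule arg_cong)
      also have "\<dots> = (\<Sum>k<rs i. f i a a ** cscale c x ** f i k k)" by (simp add: cscale_sum_right cscale_mult_left cscale_mult_right)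
      finally show "f i a a ** cscale c x = (\<Sum>k<rs i. f i a a ** cscale c x ** f i k k)" .
    next
      fix i b assume h: "i < s" "b < rs i"
      have e: "x ** f i b b = (\<Sum>k<rs i. f i k k ** x ** f i b b)" using gx h unfolding good_def by blast
      have "cscale c x ** f i b b = cscale c (x ** f i b b)" by (simp add: cscale_mult_left cscale_mult_right)
      also have "\<dots> = cscale c (\<Sum>k<rs i. f i k k ** x ** f i b b)" using e by (rule arg_cong)
      also have "\<dots> = (\<Sum>k<rs i. f i k k ** cscale c x ** f i b b)" by (simp add: cscale_sum_right cscale_mult_left cscale_mult_right)
      finally show "cscale c x ** f i b b = (\<Sum>k<rs i. f i k k ** cscale c x ** f i b b)" .
    qed
    then show "cscale c x \<in> Collect (good s rs f)" by simp
  qed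
qed

lemma good_gen:
  assumes mu: "matrix_unit_family F s rs f" and j: "j<s" "l<rs j" "m<rs j"
  shows "good s rs f (f j l m)"
  unfolding good_def
proof (intro conjI allI impI)
  fix i a b assume h: "i < s" "a < rs i" "b < rs i"
  show "\<exists>c. f i a a ** f j l m ** f i b b = cscale c (f i a b)"
  proof (cases "i = j \<and> a = l")
    case True
    then have "f i a a ** f j l m ** f i b b = f i a m ** f i b b" using mu_mult[OF mu h(1,2,2) j] by simp
    also have "\<dots> = cscale (if m = b then 1 else 0) (f i a b)"
      using mu_mult[OF mu h(1,2) _ h(1,3,3)] True j by simp
    finally show ?thesis by blast
  next
    case False
    then have "f i a a ** f j l m ** f i b b = cscale 0 (f i a b)" using mu_mult[OF mu h(1,2,2) j] by auto
    then show ?thesis by blast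
  qed
next
  fix i a assume h: "i < s" "a < rs i"
  show "f i a a ** f j l m = (\<Sum>k<rs i. f i a a ** f j l m ** f i k k)"
  proof (cases "i = j \<and> a = l")
    case True
    then have "(\<Sum>k<rs i. f i a a ** f j l m ** f i k k) = (\<Sum>k<rs i. f i a m ** f i k k)"
      using mu_mult[OF mu h(1,2,2) j] by simp
    also have "\<dots> = (\<Sum>k<rs i. if k = m then f i a m else 0)"
      by (rule sum.cong[OF refl]) (use mu_mult[OF mu h(1,2) _ h(1)] True j in auto)
    also have "\<dots> = f i a m" using True j by simp
    finally show ?thesis using mu_mult[OF mu h(1,2,2) j] True by simp
  next
    case False
    then show ?thesis using mu_mult[OF mu h(1,2,2) j] by auto
  qed
next
  fix i b assume h: "i < s" "b < rs i"
  show "f j l m ** f i b b = (\<Sum>k<rs i. f i k k ** f j l m ** f i b b)"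
  proof (cases "i = j \<and> b = m")
    case True
    then have "(\<Sum>k<rs i. f i k k ** f j l m ** f i b b) = (\<Sum>k<rs i. f i k k ** f i l b)"
      using mu_mult[OF mu j h(1,2,2)] by (simp add: matrix_mul_assoc[symmetric])
    also have "\<dots> = (\<Sum>k<rs i. if k = l then f i l b else 0)"
      by (rule sum.cong[OF refl]) (use mu_mult[OF mu h(1) _ _ h(1)] True j h in auto)
    also have "\<dots> = f i l b" using True j by simp
    finally show ?thesis using mu_mult[OF mu j h(1,2,2)] True by simp
  next
    case False
    have "f i k k ** f j l m ** f i b b = 0" if "k < rs i" for k
      using mu_mult[OF mu j h(1,2,2)] False by (auto simp: matrix_mul_assoc[symmetric])
    then show ?thesis using mu_mult[OF mu j h(1,2,2)] False by auto
  qed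
qed

lemma good_F:
  assumes mu: "matrix_unit_family F s rs f" and x: "x \<in> F"
  shows "good s rs f x"
proof -
  interpret module cscale by (rule module_cscale)
  have "x \<in> span {f i l m | i l m. i < s \<and> l < rs i \<and> m < rs i}" using x mu_span[OF mu] by simp
  then show ?thesis
  proof (induction rule: span_induct)
    case base show ?case by (rule good_subspace)
  next
    case (step y) then show ?case using good_gen[OF mu] by blast
  qed
qed


definition coef :: "(nat \<Rightarrow> nat \<Rightarrow> nat \<Rightarrow> ('n::finite) cmat) \<Rightarrow> 'n cmat \<Rightarrow> nat \<Rightarrow> nat \<Rightarrow> nat \<Rightarrow> complex" where
  "coef f x i a b = (SOME c. f i a a ** x ** f i b b = cscale c (f i a b))"

lemma coef_eq:
  assumes mu: "matrix_unit_family F s rs f" and x: "x \<in> F" and h: "i<s" "a<rs i" "b<rs i"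
  shows "f i a a ** x ** f i b b = cscale (coef f x i a b) (f i a b)"
proof -
  have "\<exists>c. f i a a ** x ** f i b b = cscale c (f i a b)"
    using good_F[OF mu x] h unfolding good_def by blast
  then show ?thesis unfolding coef_def by (rule someI_ex)
qed

lemma coef_unique:
  assumes mu: "matrix_unit_family F s rs f" and x: "x \<in> F" and h: "i<s" "a<rs i" "b<rs i"
    and eq: "f i a a ** x ** f i b b = cscale c (f i a b)"
  shows "coef f x i a b = c"
  using coef_eq[OF mu x h] eq mu_basic[OF mu h] by (metis cscale_eq_cancel)

lemma left_expand:
  assumes mu: "matrix_unit_family F s rs f" and x: "x \<in> F" and h: "i<s" "a<rs i"
  shows "f i a a ** x = (\<Sum>k<rs i. f i a a ** x ** f i k k)"
  using good_F[OF mu x] h unfolding good_def by blast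

lemma right_expand:
  assumes mu: "matrix_unit_family F s rs f" and x: "x \<in> F" and h: "i<s" "b<rs i"
  shows "x ** f i b b = (\<Sum>k<rs i. f i k k ** x ** f i b b)"
  using good_F[OF mu x] h unfolding good_def by blast

lemma coef_adj:
  assumes mu: "matrix_unit_family F s rs f" and q: "q \<in> F" "adj q = q" and h: "i<s" "a<rs i" "b<rs i"
  shows "coef f q i b a = cnj (coef f q i a b)"
proof (rule coef_unique[OF mu q(1) h(1,3,2)])
  have "f i b b ** q ** f i a a = adj (f i a a ** q ** f i b b)"
    using mu_basic[OF mu h(1,2,2)] mu_basic[OF mu h(1,3,3)] q(2) by (simp add: adj_mult matrix_mul_assoc)
  also have "\<dots> = adj (cscale (coef f q i a b) (f i a b))" using coef_eq[OF mu q(1) h] by simp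
  also have "\<dots> = cscale (cnj (coef f q i a b)) (f i b a)" using mu_basic[OF mu h] by (simp add: adj_cscale)
  finally show "f i b b ** q ** f i a a = cscale (cnj (coef f q i a b)) (f i b a)" .
qed

lemma coef_idem:
  assumes mu: "matrix_unit_family F s rs f" and q: "q \<in> F" "q ** q = q" and h: "i<s" "a<rs i" "b<rs i"
  shows "coef f q i a b = (\<Sum>k<rs i. coef f q i a k * coef f q i k b)"
proof (rule coef_unique[OF mu q(1) h])
  have "f i a a ** q ** f i b b = (f i a a ** q) ** q ** f i b b" using q(2) by (metis matrix_mul_assoc)
  also have "\<dots> = (\<Sum>k<rs i. f i a a ** q ** f i k k) ** q ** f i b b"
    using left_expand[OF mu q(1) h(1,2)] by simp
  also have "\<dots> = (\<Sum>k<rs i. (f i a a ** q ** f i k k) ** (f i k k ** q ** f i b b))"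
  proof -
    have "(f i a a ** q ** f i k k) ** (f i k k ** q ** f i b b) = f i a a ** q ** f i k k ** q ** f i b b"
      if "k < rs i" for k
    proof -
      have "f i k k ** f i k k = f i k k" using mu_mult[OF mu h(1) that that h(1) that that] by simp
      then show ?thesis by (metis matrix_mul_assoc)
    qed
    then show ?thesis by (simp add: matrix_sum_left)
  qed
  also have "\<dots> = (\<Sum>k<rs i. cscale (coef f q i a k * coef f q i k b) (f i a b))"
  proof (rule sum.cong[OF refl])
    fix k assume "k \<in> {..<rs i}"
    then have k: "k < rs i" by simp
    show "(f i a a ** q ** f i k k) ** (f i k k ** q ** f i b b) = cscale (coef f q i a k * coef f q i k b) (f i a b)"
      using coef_eq[OF mu q(1) h(1,2) k] coef_eq[OF mu q(1) h(1) k h(3)] mu_mult[OF mu h(1,2) k h(1) k h(3)]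
      by (simp add: cscale_mult_left cscale_mult_right cscale_cscale mult.commute)
  qed
  also have "\<dots> = cscale (\<Sum>k<rs i. coef f q i a k * coef f q i k b) (f i a b)"
    by (simp add: cscale_sum)
  finally show "f i a a ** q ** f i b b = cscale (\<Sum>k<rs i. coef f q i a k * coef f q i k b) (f i a b)" .
qed


lemma scalar_central:
  assumes mu: "matrix_unit_family F s rs f" and q: "q \<in> F"
    and scal: "\<forall>i<s. \<exists>lam0. \<forall>a<rs i. \<forall>b<rs i. coef f q i a b = (if a = b then lam0 else 0)"
  shows "q \<in> center F"
proof -
  interpret module cscale by (rule module_cscale)
  have gen: "q ** f i l m = f i l m ** q" if h: "i<s" "l<rs i" "m<rs i" for i l m
  proof -
    obtain lam0 where lam: "\<forall>a<rs i. \<forall>b<rs i. coef f q i a b = (if a = b then lam0 else 0)" using scal h by blast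
    have ql: "q ** f i l l = cscale lam0 (f i l l)"
    proof -
      have "q ** f i l l = (\<Sum>k<rs i. f i k k ** q ** f i l l)" by (rule right_expand[OF mu q h(1,2)])
      also have "\<dots> = (\<Sum>k<rs i. if k = l then cscale lam0 (f i l l) else 0)"
        by (rule sum.cong[OF refl]) (use coef_eq[OF mu q h(1) _ h(2)] lam h in auto)
      also have "\<dots> = cscale lam0 (f i l l)" using h by simp
      finally show ?thesis .
    qed
    have mq: "f i m m ** q = cscale lam0 (f i m m)"
    proof -
      have "f i m m ** q = (\<Sum>k<rs i. f i m m ** q ** f i k k)" by (rule left_expand[OF mu q h(1,3)])
      also have "\<dots> = (\<Sum>k<rs i. if k = m then cscale lam0 (f i m m) else 0)"
        by (rule sum.cong[OF refl]) (use coef_eq[OF mu q h(1,3)] lam h in auto)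
      also have "\<dots> = cscale lam0 (f i m m)" using h by simp
      finally show ?thesis .
    qed
    have e1: "f i l l ** f i l m = f i l m" using mu_mult[OF mu h(1,2,2) h] by simp
    have e2: "f i l m ** f i m m = f i l m" using mu_mult[OF mu h h(1,3,3)] by simp
    have "q ** f i l m = (q ** f i l l) ** f i l m" using e1 by (metis matrix_mul_assoc)
    also have "\<dots> = cscale lam0 (f i l m)" using ql e1 by (simp add: cscale_mult_left)
    also have "\<dots> = f i l m ** (f i m m ** q)" using mq e2 by (simp add: cscale_mult_right)
    also have "\<dots> = f i l m ** q" using e2 by (metis matrix_mul_assoc)
    finally show ?thesis .
  qed
  have sub: "subspace {x. q ** x = x ** q}"
    unfolding subspace_def
    by (auto simp: matrix_add_ldistrib matrix_add_rdistrib' cscale_mult_left cscale_mult_right)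
  have "q ** x = x ** q" if x: "x \<in> F" for x
  proof -
    have "x \<in> span {f i l m | i l m. i < s \<and> l < rs i \<and> m < rs i}" using x mu_span[OF mu] by simp
    then have "x \<in> {x. q ** x = x ** q}"
    proof (induction rule: span_induct)
      case base show ?case using sub by (simp add: Collect_mem_eq)
    next
      case (step y) then show ?case using gen by blast
    qed
    then show ?thesis by simp
  qed
  then show ?thesis using q by (simp add: center_def)
qed



lemma proj_coeffs:
  fixes C :: "nat \<Rightarrow> nat \<Rightarrow> complex" and r :: nat
  assumes herm: "\<And>a b. a<r \<Longrightarrow> b<r \<Longrightarrow> C b a = cnj (C a b)"
    and idem: "\<And>a b. a<r \<Longrightarrow> b<r \<Longrightarrow> C a b = (\<Sum>k<r. C a k * C k b)"
    and ns: "\<not> (\<exists>lam. \<forall>a<r. \<forall>b<r. C a b = (if a = b then lam else 0))"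
  shows "(\<exists>m b. m<r \<and> b<r \<and> m\<noteq>b \<and> 1/(4*real r) \<le> cmod (C m b)) \<or>
         (\<exists>l m. l<r \<and> m<r \<and> l\<noteq>m \<and> 1/(4*real r) \<le> cmod (C m m - C l l))"
proof (rule ccontr)
  assume "\<not> ?thesis"
  then have off: "\<And>m b. m<r \<Longrightarrow> b<r \<Longrightarrow> m\<noteq>b \<Longrightarrow> cmod (C m b) < 1/(4*real r)"
    and dg: "\<And>l m. l<r \<Longrightarrow> m<r \<Longrightarrow> l\<noteq>m \<Longrightarrow> cmod (C m m - C l l) < 1/(4*real r)"
    by (auto simp: not_le)
  define \<beta> where "\<beta> = 1/(4*real r)"
  have rpos: "r > 0"
  proof (rule ccontr)
    assume "\<not> r > 0"
    then have "r = 0" by simp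
    then show False using ns by simp
  qed
  then have rr: "real r > 0" by simp
  define d where "d m = (\<Sum>k<r. (cmod (C m k))\<^sup>2)" for m
  have diag: "C m m = of_real (d m)" if m: "m < r" for m
  proof -
    have "C m m = (\<Sum>k<r. C m k * C k m)" by (rule idem[OF m m])
    also have "\<dots> = (\<Sum>k<r. C m k * cnj (C m k))"
    proof (rule sum.cong[OF refl])
      fix k assume "k \<in> {..<r}"
      then have "C k m = cnj (C m k)" using herm[of m k] m by blast
      then show "C m k * C k m = C m k * cnj (C m k)" by (rule arg_cong)
    qed
    also have "\<dots> = (\<Sum>k<r. of_real ((cmod (C m k))\<^sup>2))" by (simp only: complex_norm_square)
    also have "\<dots> = of_real (d m)" by (simp only: of_real_sum d_def)
    finally show ?thesis .
  qed
  have dnn: "d m \<ge> 0" for m unfolding d_def by (simp add: sum_nonneg)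
  have split: "d m = (cmod (C m m))\<^sup>2 + (\<Sum>k\<in>{..<r}-{m}. (cmod (C m k))\<^sup>2)" if m: "m<r" for m
    unfolding d_def using m by (simp add: sum.remove[of "{..<r}" m])
  have dsq: "cmod (C m m) = d m" if m: "m<r" for m
    using diag[OF m] dnn[of m] by simp
  have rest: "d m - (d m)\<^sup>2 \<le> real r * \<beta>\<^sup>2" if m: "m<r" for m
  proof -
    have "d m - (d m)\<^sup>2 = (\<Sum>k\<in>{..<r}-{m}. (cmod (C m k))\<^sup>2)" using split[OF m] dsq[OF m] by simp
    also have "\<dots> \<le> (\<Sum>k\<in>{..<r}-{m}. \<beta>\<^sup>2)"
    proof (rule sum_mono)
      fix k assume "k \<in> {..<r}-{m}"
      then have "cmod (C m k) \<le> \<beta>" using off[OF m, of k] by (auto simp: \<beta>_def)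
      then show "(cmod (C m k))\<^sup>2 \<le> \<beta>\<^sup>2" by (simp add: power_mono)
    qed
    also have "\<dots> = real (card ({..<r}-{m})) * \<beta>\<^sup>2" by simp
    also have "\<dots> \<le> real r * \<beta>\<^sup>2" by (intro mult_right_mono) (use card_Diff1_le[of "{..<r}" m] in auto)
    finally show ?thesis .
  qed
  have dle1: "d m \<le> 1" if m: "m<r" for m
  proof (rule ccontr)
    assume "\<not> d m \<le> 1"
    then have "d m * 1 < d m * d m" by (intro mult_strict_left_mono) auto
    moreover have "(cmod (C m m))\<^sup>2 \<le> d m" using split[OF m] by (simp add: sum_nonneg)
    ultimately show False using dsq[OF m] by (simp add: power2_eq_square)
  qed
  have "\<exists>u0 v0. u0<r \<and> v0<r \<and> C u0 v0 \<noteq> 0"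
  proof (rule ccontr)
    assume "\<not> ?thesis"
    then have "\<forall>a<r. \<forall>b<r. C a b = (if a = b then 0 else 0)" by auto
    then show False using ns by blast
  qed
  then obtain u0 v0 where uv0: "u0<r" "v0<r" "C u0 v0 \<noteq> 0" by blast
  have "\<exists>u\<in>{..<r}. \<exists>v\<in>{..<r}. 1 / real (card {..<r}) \<le> cmod (C u v)"
  proof (rule idem_big_entry[of "{..<r}" C u0 v0])
    fix u v assume "u \<in> {..<r}" "v \<in> {..<r}"
    then have "u < r" "v < r" by auto
    then show "C u v = (\<Sum>k\<in>{..<r}. C u k * C k v)" by (rule idem)
  qed (use uv0 in auto)
  then obtain u v where uv: "u<r" "v<r" "1 / real r \<le> cmod (C u v)" by auto
  have "\<beta> < 1 / real r" using rr by (simp add: \<beta>_def field_simps)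
  have "u = v"
  proof (rule ccontr)
    assume "u \<noteq> v"
    then have "cmod (C u v) < \<beta>" using off[OF uv(1,2)] by (simp add: \<beta>_def)
    then show False using uv(3) \<open>\<beta> < 1 / real r\<close> by linarith
  qed
  then have du: "1 / real r \<le> d u" using uv dsq by simp
  define D where "D a b = (if a = b then 1 else 0) - C a b" for a b
  have Didem: "D a b = (\<Sum>k<r. D a k * D k b)" if ab: "a<r" "b<r" for a b
  proof -
    have "(\<Sum>k<r. D a k * D k b) = (\<Sum>k<r. (if a = k then 1 else 0) * (if k = b then 1 else 0))
        - (\<Sum>k<r. (if a = k then 1 else 0) * C k b) - (\<Sum>k<r. C a k * (if k = b then 1 else 0))
        + (\<Sum>k<r. C a k * C k b)"
      unfolding D_def by (simp add: algebra_simps sum.distrib sum_subtractf)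
    also have "\<dots> = (if a = b then 1 else 0) - C a b - C a b + C a b"
    proof -
      have "(\<Sum>k<r. (if a = k then 1 else 0) * (if k = b then 1 else 0)) = (if a = b then 1 else (0::complex))"
        "(\<Sum>k<r. (if a = k then 1 else 0) * C k b) = C a b"
        "(\<Sum>k<r. C a k * (if k = b then 1 else 0)) = C a b"
        using ab by (simp_all add: if_distrib[of "\<lambda>x. x * _"] if_distrib[of "\<lambda>x. _ * x"] sum.delta sum.delta' cong: if_cong)
      moreover have "(\<Sum>k<r. C a k * C k b) = C a b" using idem[OF ab] by simp
      ultimately show ?thesis by simp
    qed
    finally show ?thesis by (simp add: D_def)
  qed
  have "\<exists>w0 z0. w0<r \<and> z0<r \<and> D w0 z0 \<noteq> 0"
  proof (rule ccontr)
    assume "\<not> ?thesis"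
    then have "\<forall>a<r. \<forall>b<r. C a b = (if a = b then 1 else 0)" by (auto simp: D_def)
    then show False using ns by blast
  qed
  then obtain w0 z0 where wz0: "w0<r" "z0<r" "D w0 z0 \<noteq> 0" by blast
  have "\<exists>w\<in>{..<r}. \<exists>z\<in>{..<r}. 1 / real (card {..<r}) \<le> cmod (D w z)"
  proof (rule idem_big_entry[of "{..<r}" D w0 z0])
    fix u v assume "u \<in> {..<r}" "v \<in> {..<r}"
    then have "u < r" "v < r" by auto
    then show "D u v = (\<Sum>k\<in>{..<r}. D u k * D k v)" by (rule Didem)
  qed (use wz0 in auto)
  then obtain w z where wz: "w<r" "z<r" "1 / real r \<le> cmod (D w z)" by auto
  have "w = z"
  proof (rule ccontr)
    assume "w \<noteq> z"
    then have "cmod (D w z) = cmod (C w z)" by (simp add: D_def norm_minus_commute)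
    moreover have "cmod (C w z) < \<beta>" using off[OF wz(1,2)] \<open>w \<noteq> z\<close> by (simp add: \<beta>_def)
    ultimately show False using wz(3) \<open>\<beta> < 1 / real r\<close> by linarith
  qed
  have "D w w = of_real (1 - d w)" using diag[OF wz(1)] by (simp add: D_def)
  then have "cmod (D w w) = \<bar>1 - d w\<bar>" by (simp only: norm_of_real)
  then have dw: "1 / real r \<le> 1 - d w" using wz(3) \<open>w = z\<close> dle1[OF wz(1)] by simp
  have "d u \<le> d w + \<beta>"
  proof (cases "u = w")
    case False
    have "cmod (C u u - C w w) = \<bar>d u - d w\<bar>" using diag[OF uv(1)] diag[OF wz(1)] by (simp flip: of_real_diff)
    then show ?thesis using dg[OF wz(1) uv(1)] False by (simp add: \<beta>_def)
  qed (simp add: \<beta>_def)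
  define x where "x = d u"
  have x1: "1 / real r \<le> x" using du x_def by simp
  have x2: "1 - x \<ge> 3 / (4 * real r)"
    using dw \<open>d u \<le> d w + \<beta>\<close> rr unfolding x_def \<beta>_def by (simp add: field_simps)
  have lower: "x * (1 - x) \<ge> 3 / (8 * real r)"
  proof (cases "x \<le> 1/2")
    case True
    then have "x * (1 - x) \<ge> x * (1/2)" using x1 rr by (intro mult_left_mono) (auto intro: order_trans[OF _ x1])
    moreover have "x * (1/2) \<ge> 3 / (8 * real r)" using x1 rr by (simp add: field_simps)
    ultimately show ?thesis by linarith
  next
    case False
    have "0 < 3 / (4 * real r)" using rr by simp
    then have "0 \<le> 1 - x" using x2 by linarith
    then have "x * (1 - x) \<ge> (1/2) * (1 - x)" using False by (intro mult_right_mono) auto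
    moreover have "(1/2) * (1 - x) \<ge> 3 / (8 * real r)" using x2 rr by (simp add: field_simps)
    ultimately show ?thesis by linarith
  qed
  have upper: "x * (1 - x) \<le> 1 / (16 * real r)"
  proof -
    have "x * (1 - x) = d u - (d u)\<^sup>2" by (simp add: x_def algebra_simps power2_eq_square)
    also have "\<dots> \<le> real r * \<beta>\<^sup>2" by (rule rest[OF uv(1)])
    also have "\<dots> = 1 / (16 * real r)" using rr by (simp add: \<beta>_def power2_eq_square field_simps)
    finally show ?thesis .
  qed
  from lower upper rr show False by (simp add: field_simps)
qed





lemma matrix_diff_ldistrib: "A ** (B - C) = A ** B - A ** (C::'a::ring_1^'n^'n)"
  by (simp add: matrix_matrix_mult_def vec_eq_iff sum_subtractf right_diff_distrib)

lemma matrix_diff_rdistrib: "(B - C) ** A = B ** A - C ** (A::'a::ring_1^'n^'n)"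
  by (simp add: matrix_matrix_mult_def vec_eq_iff sum_subtractf left_diff_distrib)

lemma cscale_diff: "cscale (a - b) A = cscale a A - cscale b A"
  by (simp add: cscale_def vec_eq_iff left_diff_distrib)

theorem proposition3p5:
  "\<exists>\<alpha>>0. \<forall>(F :: ('n::finite) cmat set) k e q.
     k \<le> CARD('n)\<^sup>2 \<and> cstar_subalg F \<and> cdim F = k \<and> matrix_units F k e \<and>
     q \<in> F \<and> is_projection q \<longrightarrow>
     q \<in> center F \<or> (\<exists>m\<in>{1..k}. opnorm (commutator (e m) q) \<ge> \<alpha>)"
proof (intro exI[of _ "1 / (4 * (real CARD('n))^5)"] conjI allI impI)
  show "0 < 1 / (4 * (real CARD('n))^5)" by simp
  fix F :: "'n cmat set" and k e q
  assume H: "k \<le> CARD('n)\<^sup>2 \<and> cstar_subalg F \<and> cdim F = k \<and> matrix_units F k e \<and> q \<in> F \<and> is_projection q"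
  define n where "n = real CARD('n)"
  have npos: "n > 0" by (simp add: n_def)
  from H obtain s rs f where mu: "matrix_unit_family F s rs f" and ksum: "k = (\<Sum>i<s. (rs i)\<^sup>2)"
    and eimg: "e ` {1..k} = {f i l m | i l m. i < s \<and> l < rs i \<and> m < rs i}"
    unfolding matrix_units_def by blast
  have qF: "q \<in> F" and qadj: "adj q = q" and qq: "q ** q = q" using H by (auto simp: is_projection_def)
  show "q \<in> center F \<or> (\<exists>m\<in>{1..k}. opnorm (commutator (e m) q) \<ge> 1 / (4 * (real CARD('n))^5))"
  proof (cases "q \<in> center F")
    case True then show ?thesis by blast
  next
    case False
    then obtain i where i: "i < s" and ns: "\<not> (\<exists>lam. \<forall>a<rs i. \<forall>b<rs i. coef f q i a b = (if a = b then lam else 0))"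
      using scalar_central[OF mu qF] by blast
    define r where "r = rs i"
    have "(rs i)\<^sup>2 \<le> k" unfolding ksum by (rule member_le_sum) (use i in auto)
    then have "(rs i)\<^sup>2 \<le> CARD('n)\<^sup>2" using H by linarith
    then have rn: "rs i \<le> CARD('n)" by (rule power2_le_imp_le) auto
    have rpos: "rs i > 0"
    proof (rule ccontr)
      assume "\<not> rs i > 0"
      then have "rs i = 0" by simp
      then show False using ns by simp
    qed
    have beta: "1 / (4 * n) \<le> 1 / (4 * real (rs i))"
      using rn rpos by (simp add: n_def frac_le)
    have key: "opnorm X \<ge> 1 / (4 * (real CARD('n))^5)" if kx: "n^4 * opnorm X \<ge> 1 / (4 * n)" for X
    proof -
      have n5: "n^5 = n * n^4" by (simp add: eval_nat_numeral)
      have "1 \<le> (4 * n) * (n^4 * opnorm X)" using kx npos by (simp add: field_simps)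
      then have "1 \<le> opnorm X * (4 * n^5)" by (simp add: n5 mult_ac)
      then show ?thesis using npos unfolding n_def[symmetric] by (simp add: field_simps)
    qed
    have findidx: "\<exists>idx\<in>{1..k}. e idx = f i l m" if "l < rs i" "m < rs i" for l m
    proof -
      have "f i l m \<in> e ` {1..k}" using eimg i that by blast
      then show ?thesis by auto
    qed
    have herm: "\<And>a b. a<rs i \<Longrightarrow> b<rs i \<Longrightarrow> coef f q i b a = cnj (coef f q i a b)"
      using coef_adj[OF mu qF qadj i] by blast
    have idem: "\<And>a b. a<rs i \<Longrightarrow> b<rs i \<Longrightarrow> coef f q i a b = (\<Sum>k<rs i. coef f q i a k * coef f q i k b)"
      using coef_idem[OF mu qF qq i] by blast
    have pc: "(\<exists>m b. m<rs i \<and> b<rs i \<and> m\<noteq>b \<and> 1/(4*real (rs i)) \<le> cmod (coef f q i m b)) \<or>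
         (\<exists>l m. l<rs i \<and> m<rs i \<and> l\<noteq>m \<and> 1/(4*real (rs i)) \<le> cmod (coef f q i m m - coef f q i l l))"
    proof (rule proj_coeffs[of "rs i" "coef f q i"])
      fix a b assume "a < rs i" "b < rs i"
      then show "coef f q i b a = cnj (coef f q i a b)" by (rule herm)
    next
      fix a b assume "a < rs i" "b < rs i"
      then show "coef f q i a b = (\<Sum>k<rs i. coef f q i a k * coef f q i k b)" by (rule idem)
    next
      show "\<not> (\<exists>lam. \<forall>a<rs i. \<forall>b<rs i. coef f q i a b = (if a = b then lam else 0))" by (rule ns)
    qed
    from pc show ?thesis
    proof (elim disjE exE conjE)
      fix m b assume mb: "m < rs i" "b < rs i" "m \<noteq> b" "1 / (4 * real (rs i)) \<le> cmod (coef f q i m b)"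
      define X where "X = commutator (f i m m) q"
      have mm: "f i m m ** f i m m = f i m m" using mu_mult[OF mu i mb(1,1) i mb(1,1)] by simp
      have mb0: "f i m m ** f i b b = 0" using mu_mult[OF mu i mb(1,1) i mb(2,2)] mb(3) by simp
      have "f i m m ** X ** f i b b = f i m m ** f i m m ** q ** f i b b - f i m m ** q ** (f i m m ** f i b b)"
        unfolding X_def commutator_def by (simp add: matrix_diff_ldistrib matrix_diff_rdistrib matrix_mul_assoc)
      also have "\<dots> = cscale (coef f q i m b) (f i m b)"
        using mm mb0 coef_eq[OF mu qF i mb(1,2)] by simp
      finally have "cmod (coef f q i m b) \<le> n^4 * opnorm X"
        using compress_bound[OF mu i mb(1,2)] n_def by blast
      then have "opnorm X \<ge> 1 / (4 * (real CARD('n))^5)" using mb(4) beta by (intro key) linarith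
      then show ?thesis using findidx[OF mb(1,1)] X_def by metis
    next
      fix l m assume lm: "l < rs i" "m < rs i" "l \<noteq> m" "1 / (4 * real (rs i)) \<le> cmod (coef f q i m m - coef f q i l l)"
      define X where "X = commutator (f i l m) q"
      have ll_lm: "f i l l ** f i l m = f i l m" using mu_mult[OF mu i lm(1,1) i lm(1,2)] by simp
      have lm_mm: "f i l m ** f i m m = f i l m" using mu_mult[OF mu i lm(1,2) i lm(2,2)] by simp
      have t1: "f i l m ** q ** f i m m = cscale (coef f q i m m) (f i l m)"
      proof -
        have "f i l m ** q ** f i m m = f i l m ** (f i m m ** q ** f i m m)"
          using lm_mm by (metis matrix_mul_assoc)
        also have "\<dots> = cscale (coef f q i m m) (f i l m)"
          using coef_eq[OF mu qF i lm(2,2)] lm_mm by (simp add: cscale_mult_right)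
        finally show ?thesis .
      qed
      have t2: "f i l l ** q ** f i l m = cscale (coef f q i l l) (f i l m)"
      proof -
        have "f i l l ** q ** f i l m = (f i l l ** q ** f i l l) ** f i l m"
          using ll_lm by (metis matrix_mul_assoc)
        also have "\<dots> = cscale (coef f q i l l) (f i l m)"
          using coef_eq[OF mu qF i lm(1,1)] ll_lm by (simp add: cscale_mult_left)
        finally show ?thesis .
      qed
      have "f i l l ** X ** f i m m = (f i l l ** f i l m) ** q ** f i m m - f i l l ** q ** (f i l m ** f i m m)"
        unfolding X_def commutator_def by (simp add: matrix_diff_ldistrib matrix_diff_rdistrib matrix_mul_assoc)
      also have "\<dots> = cscale (coef f q i m m - coef f q i l l) (f i l m)"
        using ll_lm lm_mm t1 t2 by (simp add: cscale_diff)
      finally have "cmod (coef f q i m m - coef f q i l l) \<le> n^4 * opnorm X"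
        using compress_bound[OF mu i lm(1,2)] n_def by blast
      then have "opnorm X \<ge> 1 / (4 * (real CARD('n))^5)" using lm(4) beta by (intro key) linarith
      then show ?thesis using findidx[OF lm(1,2)] X_def by metis
    qed
  qed
qed

end
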